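(* Let $\varphi_1,\varphi_2:\mathbb{R}^d\to\mathbb{R}$ and suppose $x_{\varphi_1}\in\arg\min_x\varphi_1(x)$ and $x_{\varphi_2}\in\arg\min_x\varphi_2(x)$. (i) If each $\varphi_i$ admits a $\nu_{\varphi_i}$ error bound, then $$\nu_{\varphi_1}(\|x_{\varphi_1}-x_{\varphi_2}\|_2)+\nu_{\varphi_2}(\|x_{\varphi_1}-x_{\varphi_2}\|_2)\le \varphi_2(x_{\varphi_1})-\varphi_1(x_{\varphi_1})-\big(\varphi_2(x_{\varphi_2})-\varphi_1(x_{\varphi_2})\big).$$ (ii) If $\varphi_2-\varphi_1$ is differentiable and $\varphi_2$ has $\nu_{\varphi_2}$ gradient growth, then $$\nu_{\varphi_2}(\|x_{\varphi_1}-x_{\varphi_2}\|_2)\le \langle x_{\varphi_1}-x_{\varphi_2},\nabla(\varphi_2-\varphi_1)(x_{\varphi_1})\rangle .$$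
   Context: Let $\nu(r):=\inf\{s:\omega(s)\ge r\}$ be the generalized inverse of a non-decreasing function $\omega$ with $\omega(0)=0$. A function $\varphi$ admits a $\nu$ error bound if $\nu(\|x-x^*\|_2)\le\varphi(x)-\varphi(x^* )$ for $x^*=\arg\min_{x'}\varphi(x')$ and all $x\in\mathbb{R}^d$. A function $\varphi$ has $\nu$ gradient growth if $\varphi$ is subdifferentiable and $\nu(\|x-y\|_2)\le\langle y-x,u-v\rangle$ for all $x,y\in\mathbb{R}^d$ and all $u\in\partial\varphi(y)$, $v\in\partial\varphi(x)$, where $\partial$ denotes the subdifferential. *)

theory Defs
  imports "HOL-Analysis.Analysis"
begin

definition admissible_modulus :: "(real \<Rightarrow> real) \<Rightarrow> bool" where
  "admissible_modulus \<omega> \<longleftrightarrow> mono_on {0..} \<omega> \<and> \<omega> 0 = 0"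

text \<open>Generalized inverse nu(r) = inf {s >= 0. omega s >= r}, extended-real valued
  (inf of the empty set is +infinity).\<close>
definition gen_inv :: "(real \<Rightarrow> real) \<Rightarrow> real \<Rightarrow> ereal" where
  "gen_inv \<omega> r = Inf (ereal ` {s. 0 \<le> s \<and> \<omega> s \<ge> r})"

definition is_minimizer :: "('a \<Rightarrow> real) \<Rightarrow> 'a \<Rightarrow> bool" where
  "is_minimizer \<phi> x \<longleftrightarrow> (\<forall>y. \<phi> x \<le> \<phi> y)"

definition error_bound :: "(real \<Rightarrow> ereal) \<Rightarrow> ('a::real_normed_vector \<Rightarrow> real) \<Rightarrow> bool" where
  "error_bound \<nu> \<phi> \<longleftrightarrow>
     (\<forall>xs. is_minimizer \<phi> xs \<longrightarrow> (\<forall>x. \<nu> (norm (x - xs)) \<le> ereal (\<phi> x - \<phi> xs)))"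

definition subdiff :: "('a::real_inner \<Rightarrow> real) \<Rightarrow> 'a \<Rightarrow> 'a set" where
  "subdiff \<phi> x = {u. \<forall>z. \<phi> z \<ge> \<phi> x + inner u (z - x)}"

definition subdifferentiable :: "('a::real_inner \<Rightarrow> real) \<Rightarrow> bool" where
  "subdifferentiable \<phi> \<longleftrightarrow> (\<forall>x. subdiff \<phi> x \<noteq> {})"

definition gradient_growth :: "(real \<Rightarrow> ereal) \<Rightarrow> ('a::real_inner \<Rightarrow> real) \<Rightarrow> bool" where
  "gradient_growth \<nu> \<phi> \<longleftrightarrow> subdifferentiable \<phi> \<and>
     (\<forall>x y u v. u \<in> subdiff \<phi> y \<longrightarrow> v \<in> subdiff \<phi> x \<longrightarrow>
        \<nu> (norm (x - y)) \<le> ereal (inner (y - x) (u - v)))"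

end

theory Submission
  imports Defs
begin

lemma conv_seg:
  fixes \<phi> :: "'a::real_inner \<Rightarrow> real"
  assumes "subdifferentiable \<phi>" and "0 \<le> t" "t \<le> 1"
  shows "\<phi> (x + t *\<^sub>R (z - x)) \<le> (1 - t) * \<phi> x + t * \<phi> z"
proof -
  define p where "p = x + t *\<^sub>R (z - x)"
  obtain u where u: "u \<in> subdiff \<phi> p" using assms(1) unfolding subdifferentiable_def by blast
  have a: "\<phi> x \<ge> \<phi> p + inner u (x - p)" using u unfolding subdiff_def by blast
  have b: "\<phi> z \<ge> \<phi> p + inner u (z - p)" using u unfolding subdiff_def by blast
  have xp: "x - p = - t *\<^sub>R (z - x)" unfolding p_def by (simp add: algebra_simps)
  have zp: "z - p = (1 - t) *\<^sub>R (z - x)" unfolding p_def by (simp add: algebra_simps)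
  have a': "\<phi> x \<ge> \<phi> p - t * inner u (z - x)" using a xp by simp
  have b': "\<phi> z \<ge> \<phi> p + (1 - t) * inner u (z - x)" using b zp by simp
  have "(1 - t) * \<phi> x \<ge> (1 - t) * (\<phi> p - t * inner u (z - x))"
    using a' assms by (intro mult_left_mono) auto
  moreover have "t * \<phi> z \<ge> t * (\<phi> p + (1 - t) * inner u (z - x))"
    using b' assms by (intro mult_left_mono) auto
  ultimately have "(1 - t) * \<phi> x + t * \<phi> z \<ge> \<phi> p"
    by (simp add: algebra_simps)
  then show ?thesis unfolding p_def .
qed

lemma grad_in_subdiff:
  fixes \<phi>1 \<phi>2 :: "'a::real_inner \<Rightarrow> real"
  assumes sd: "subdifferentiable \<phi>2" and m: "is_minimizer \<phi>1 x1"
    and g: "GDERIV (\<lambda>z. \<phi>2 z - \<phi>1 z) x1 :> g"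
  shows "g \<in> subdiff \<phi>2 x1"
  unfolding subdiff_def
proof (intro CollectI allI)
  fix z
  define h where "h = (\<lambda>z. \<phi>2 z - \<phi>1 z)"
  define d where "d = z - x1"
  have hd: "(h has_derivative (\<lambda>v. inner v g)) (at x1)"
    using g unfolding h_def gderiv_def .
  have ld: "((\<lambda>t. x1 + t *\<^sub>R d) has_derivative (\<lambda>t. t *\<^sub>R d)) (at 0 within {0<..})"
    by (auto intro!: derivative_eq_intros)
  have "((\<lambda>t. h (x1 + t *\<^sub>R d)) has_derivative (\<lambda>t. inner (t *\<^sub>R d) g)) (at 0 within {0<..})"
    using has_derivative_in_compose[OF ld, of h "\<lambda>v. inner v g"] hd
    by (simp add: o_def has_derivative_at_withinI)
  then have "((\<lambda>t. h (x1 + t *\<^sub>R d)) has_field_derivative (inner d g)) (at 0 within {0<..})"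
    unfolding has_field_derivative_def by (simp add: mult.commute[of _ "inner d g"])
  then have lim: "((\<lambda>t. (h (x1 + t *\<^sub>R d) - h x1) / t) \<longlongrightarrow> inner d g) (at_right 0)"
    unfolding has_field_derivative_iff by simp
  have ev: "\<forall>\<^sub>F t in at_right 0. (h (x1 + t *\<^sub>R d) - h x1) / t \<le> \<phi>2 z - \<phi>2 x1"
    unfolding eventually_at_right_field
  proof (intro exI[of _ 1] conjI allI impI)
    fix t :: real assume t: "0 < t" "t < 1"
    have c: "\<phi>2 (x1 + t *\<^sub>R d) \<le> (1 - t) * \<phi>2 x1 + t * \<phi>2 z"
      using conv_seg[OF sd, of t x1 z] t unfolding d_def by simp
    have "\<phi>1 x1 \<le> \<phi>1 (x1 + t *\<^sub>R d)" using m unfolding is_minimizer_def by blast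
    then have "h (x1 + t *\<^sub>R d) - h x1 \<le> t * (\<phi>2 z - \<phi>2 x1)"
      using c unfolding h_def by (simp add: algebra_simps)
    then show "(h (x1 + t *\<^sub>R d) - h x1) / t \<le> \<phi>2 z - \<phi>2 x1"
      using t by (simp add: divide_le_eq mult.commute)
  qed simp
  have "inner d g \<le> \<phi>2 z - \<phi>2 x1"
    using tendsto_upperbound[OF lim ev] by simp
  then show "\<phi>2 x1 + inner g (z - x1) \<le> \<phi>2 z"
    unfolding d_def by (simp add: inner_commute)
qed

theorem lemma1:
  fixes \<phi>1 \<phi>2 :: "real^'d \<Rightarrow> real" and x1 x2 :: "real^'d"
    and \<omega>1 \<omega>2 :: "real \<Rightarrow> real"
  assumes "admissible_modulus \<omega>1" and "admissible_modulus \<omega>2"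
    and "is_minimizer \<phi>1 x1" and "is_minimizer \<phi>2 x2"
  shows "(error_bound (gen_inv \<omega>1) \<phi>1 \<and> error_bound (gen_inv \<omega>2) \<phi>2 \<longrightarrow>
            gen_inv \<omega>1 (norm (x1 - x2)) + gen_inv \<omega>2 (norm (x1 - x2))
              \<le> ereal (\<phi>2 x1 - \<phi>1 x1 - (\<phi>2 x2 - \<phi>1 x2)))
       \<and> (\<forall>g. (\<forall>x. (\<lambda>z. \<phi>2 z - \<phi>1 z) differentiable (at x))
              \<and> (GDERIV (\<lambda>z. \<phi>2 z - \<phi>1 z) x1 :> g)
              \<and> gradient_growth (gen_inv \<omega>2) \<phi>2 \<longrightarrow>
            gen_inv \<omega>2 (norm (x1 - x2)) \<le> ereal (inner (x1 - x2) g))"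
proof (intro conjI impI allI)
  assume "error_bound (gen_inv \<omega>1) \<phi>1 \<and> error_bound (gen_inv \<omega>2) \<phi>2"
  then have e1: "gen_inv \<omega>1 (norm (x2 - x1)) \<le> ereal (\<phi>1 x2 - \<phi>1 x1)"
    and e2: "gen_inv \<omega>2 (norm (x1 - x2)) \<le> ereal (\<phi>2 x1 - \<phi>2 x2)"
    using assms(3,4) unfolding error_bound_def by blast+
  have "norm (x2 - x1) = norm (x1 - x2)" by (rule norm_minus_commute)
  then have "gen_inv \<omega>1 (norm (x1 - x2)) + gen_inv \<omega>2 (norm (x1 - x2))
     \<le> ereal (\<phi>1 x2 - \<phi>1 x1) + ereal (\<phi>2 x1 - \<phi>2 x2)"
    using e1 e2 by (metis add_mono)
  also have "\<dots> = ereal (\<phi>2 x1 - \<phi>1 x1 - (\<phi>2 x2 - \<phi>1 x2))" by simp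
  finally show "gen_inv \<omega>1 (norm (x1 - x2)) + gen_inv \<omega>2 (norm (x1 - x2))
              \<le> ereal (\<phi>2 x1 - \<phi>1 x1 - (\<phi>2 x2 - \<phi>1 x2))" .
next
  fix g
  assume H: "(\<forall>x. (\<lambda>z. \<phi>2 z - \<phi>1 z) differentiable (at x))
              \<and> (GDERIV (\<lambda>z. \<phi>2 z - \<phi>1 z) x1 :> g)
              \<and> gradient_growth (gen_inv \<omega>2) \<phi>2"
  then have gg: "gradient_growth (gen_inv \<omega>2) \<phi>2" by blast
  have u: "g \<in> subdiff \<phi>2 x1"
    using grad_in_subdiff[of \<phi>2 \<phi>1 x1 g] H gg assms(3) unfolding gradient_growth_def by blast
  have v: "0 \<in> subdiff \<phi>2 x2" using assms(4) unfolding subdiff_def is_minimizer_def by simp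
  have "gen_inv \<omega>2 (norm (x2 - x1)) \<le> ereal (inner (x1 - x2) (g - 0))"
    using gg u v unfolding gradient_growth_def by blast
  then show "gen_inv \<omega>2 (norm (x1 - x2)) \<le> ereal (inner (x1 - x2) g)"
    by (simp add: norm_minus_commute)
qed

end
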